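(* Let $G$ be a finite simple connected graph of order at least $2$ having a minimum dominating set $D$ with $c(D)\neq \emptyset$. Then the Cartesian product $G \,\square\, H$ is not well-dominated for every finite simple connected graph $H$ of order at least $2$.
   Context: For $u\in A\subseteq V(G)$, $\mathrm{pn}[u,A]=\{x\in V(G): N[x]\cap A=\{u\}\}$; for a dominating set $D$, $c(D)=\{x\in D : \mathrm{pn}[x,D]=\{x\}\}$. A graph is well-dominated if every minimal (with respect to inclusion) dominating set is a minimum dominating set. The Cartesian product $G\,\square\, H$ has vertex set $V(G)\times V(H)$, with $(g_1,h_1)$ adjacent to $(g_2,h_2)$ iff either ($g_1=g_2$ and $h_1h_2\in E(H)$) or ($h_1=h_2$ and $g_1g_2\in E(G)$). *)

theory Defs
  imports Main
begin

definition simple_graph :: "'a set \<Rightarrow> ('a \<Rightarrow> 'a \<Rightarrow> bool) \<Rightarrow> bool" where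
  "simple_graph V E \<longleftrightarrow> finite V \<and> (\<forall>x y. E x y \<longrightarrow> x \<in> V \<and> y \<in> V)
     \<and> (\<forall>x y. E x y \<longrightarrow> E y x) \<and> (\<forall>x. \<not> E x x)"

definition connected_graph :: "'a set \<Rightarrow> ('a \<Rightarrow> 'a \<Rightarrow> bool) \<Rightarrow> bool" where
  "connected_graph V E \<longleftrightarrow> V \<noteq> {} \<and> (\<forall>x\<in>V. \<forall>y\<in>V. E\<^sup>*\<^sup>* x y)"

definition closed_nbhd :: "'a set \<Rightarrow> ('a \<Rightarrow> 'a \<Rightarrow> bool) \<Rightarrow> 'a \<Rightarrow> 'a set" where
  "closed_nbhd V E x = insert x {y \<in> V. E x y}"

definition dominating :: "'a set \<Rightarrow> ('a \<Rightarrow> 'a \<Rightarrow> bool) \<Rightarrow> 'a set \<Rightarrow> bool" where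
  "dominating V E D \<longleftrightarrow> D \<subseteq> V \<and> (\<forall>v\<in>V. closed_nbhd V E v \<inter> D \<noteq> {})"

definition minimal_dominating :: "'a set \<Rightarrow> ('a \<Rightarrow> 'a \<Rightarrow> bool) \<Rightarrow> 'a set \<Rightarrow> bool" where
  "minimal_dominating V E D \<longleftrightarrow> dominating V E D \<and> (\<forall>D'. D' \<subset> D \<longrightarrow> \<not> dominating V E D')"

definition minimum_dominating :: "'a set \<Rightarrow> ('a \<Rightarrow> 'a \<Rightarrow> bool) \<Rightarrow> 'a set \<Rightarrow> bool" where
  "minimum_dominating V E D \<longleftrightarrow> dominating V E D \<and> (\<forall>D'. dominating V E D' \<longrightarrow> card D \<le> card D')"

definition well_dominated :: "'a set \<Rightarrow> ('a \<Rightarrow> 'a \<Rightarrow> bool) \<Rightarrow> bool" where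
  "well_dominated V E \<longleftrightarrow> (\<forall>D. minimal_dominating V E D \<longrightarrow> minimum_dominating V E D)"

definition pn :: "'a set \<Rightarrow> ('a \<Rightarrow> 'a \<Rightarrow> bool) \<Rightarrow> 'a \<Rightarrow> 'a set \<Rightarrow> 'a set" where
  "pn V E u A = {x \<in> V. closed_nbhd V E x \<inter> A = {u}}"

definition cD :: "'a set \<Rightarrow> ('a \<Rightarrow> 'a \<Rightarrow> bool) \<Rightarrow> 'a set \<Rightarrow> 'a set" where
  "cD V E D = {x \<in> D. pn V E x D = {x}}"

definition cprod_edges :: "'a set \<Rightarrow> ('a \<Rightarrow> 'a \<Rightarrow> bool) \<Rightarrow> 'b set \<Rightarrow> ('b \<Rightarrow> 'b \<Rightarrow> bool)
    \<Rightarrow> ('a \<times> 'b) \<Rightarrow> ('a \<times> 'b) \<Rightarrow> bool" where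
  "cprod_edges VG EG VH EH p q \<longleftrightarrow> p \<in> VG \<times> VH \<and> q \<in> VG \<times> VH \<and>
     ((fst p = fst q \<and> EH (snd p) (snd q)) \<or> (snd p = snd q \<and> EG (fst p) (fst q)))"

end

theory Submission
  imports Defs
begin

lemma mem_cn: "u \<in> closed_nbhd V E v \<longleftrightarrow> u = v \<or> (u \<in> V \<and> E v u)"
  by (auto simp: closed_nbhd_def)

lemma has_nbr:
  assumes sg: "simple_graph V E" and cg: "connected_graph V E" and c2: "card V \<ge> 2"
    and v: "v \<in> V"
  shows "\<exists>y. E v y"
proof -
  have fin: "finite V" using sg by (simp add: simple_graph_def)
  have "card (V - {v}) \<ge> 1" using c2 v fin by (simp add: card_Diff_singleton)
  then obtain w where w: "w \<in> V" "w \<noteq> v"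
  proof -
    have "V - {v} \<noteq> {}"
    proof
      assume "V - {v} = {}"
      then have "card (V - {v}) = 0" by (simp only: card.empty)
      then show False using \<open>card (V - {v}) \<ge> 1\<close> by linarith
    qed
    then show ?thesis using that by blast
  qed
  have "E\<^sup>*\<^sup>* v w" using cg v w by (simp add: connected_graph_def)
  then show ?thesis using w(2) by (cases rule: converse_rtranclpE) auto
qed

lemma epn_exists:
  assumes sg: "simple_graph V E" and cg: "connected_graph V E" and c2: "card V \<ge> 2"
    and D0: "minimum_dominating V E D0"
  shows "\<exists>D. minimum_dominating V E D \<and>
           (\<forall>d\<in>D. \<exists>w\<in>V. w \<notin> D \<and> closed_nbhd V E w \<inter> D = {d})"
proof -
  have fin: "finite V" using sg by (simp add: simple_graph_def)
  have inV: "\<And>x y. E x y \<Longrightarrow> x \<in> V \<and> y \<in> V" using sg by (simp add: simple_graph_def)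
  have sym: "\<And>x y. E x y \<Longrightarrow> E y x" using sg by (simp add: simple_graph_def)
  have irr: "\<And>x. \<not> E x x" using sg by (simp add: simple_graph_def)
  define F where "F = {S. S \<subseteq> V \<and> minimum_dominating V E S}"
  define f where "f S = card {v\<in>S. \<exists>u\<in>S. E v u}" for S
  have finF: "finite F"
    by (rule finite_subset[of F "Pow V"]) (auto simp: F_def fin)
  have D0F: "D0 \<in> F" using D0 by (auto simp: F_def minimum_dominating_def dominating_def)
  define m where "m = Max (f ` F)"
  have "m \<in> f ` F" unfolding m_def using finF D0F by (intro Max_in) auto
  then obtain D where DF: "D \<in> F" and fD: "f D = m" by auto
  have maxD: "\<And>T. T \<in> F \<Longrightarrow> f T \<le> f D" using finF fD m_def by auto
  have Dmin: "minimum_dominating V E D" and DV: "D \<subseteq> V" using DF by (auto simp: F_def)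
  have finD: "finite D" using DV fin finite_subset by blast
  have Ddom: "dominating V E D" using Dmin by (simp add: minimum_dominating_def)
  have Dle: "\<And>D'. dominating V E D' \<Longrightarrow> card D \<le> card D'"
    using Dmin by (simp add: minimum_dominating_def)
  have "\<forall>d\<in>D. \<exists>w\<in>V. w \<notin> D \<and> closed_nbhd V E w \<inter> D = {d}"
  proof (rule ccontr)
    assume "\<not> ?thesis"
    then obtain d where dD: "d \<in> D" and noepn: "\<And>w. w \<in> V \<Longrightarrow> w \<notin> D \<Longrightarrow> closed_nbhd V E w \<inter> D \<noteq> {d}"
      by blast
    have "\<not> dominating V E (D - {d})"
    proof
      assume "dominating V E (D - {d})"
      then have "card D \<le> card (D - {d})" using Dle by blast
      moreover have "card D > 0" using finD dD by (auto simp: card_gt_0_iff)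
      ultimately show False using finD dD by (simp add: card_Diff_singleton)
    qed
    then obtain v where vV: "v \<in> V" and vd: "closed_nbhd V E v \<inter> (D - {d}) = {}"
      using DV by (auto simp: dominating_def)
    have "closed_nbhd V E v \<inter> D \<noteq> {}" using Ddom vV by (simp add: dominating_def)
    then have vD: "closed_nbhd V E v \<inter> D = {d}" using vd by blast
    have "v = d"
    proof (rule ccontr)
      assume "v \<noteq> d"
      have "v \<notin> D"
      proof
        assume "v \<in> D"
        then have "v \<in> closed_nbhd V E v \<inter> D" by (simp add: mem_cn)
        then show False using vD \<open>v \<noteq> d\<close> by blast
      qed
      then show False using noepn[OF vV \<open>v \<notin> D\<close>] vD by simp
    qed
    then have dD1: "closed_nbhd V E d \<inter> D = {d}" using vD by simp
    have dV: "d \<in> V" using dD DV by blast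
    obtain y where dy: "E d y" using has_nbr[OF sg cg c2 dV] by blast
    have yV: "y \<in> V" using inV dy by blast
    have yD: "y \<notin> D"
    proof
      assume "y \<in> D"
      then have "y \<in> closed_nbhd V E d \<inter> D" using dy yV by (simp add: mem_cn)
      then have "y = d" using dD1 by blast
      then show False using dy irr by simp
    qed
    have "d \<in> closed_nbhd V E y \<inter> D" using dy sym dV dD by (simp add: mem_cn)
    moreover have "closed_nbhd V E y \<inter> D \<noteq> {d}" by (rule noepn[OF yV yD])
    ultimately obtain z where z: "z \<in> closed_nbhd V E y \<inter> D" "z \<noteq> d" by blast
    have yz: "E y z" using z yD by (auto simp: mem_cn)
    define D2 where "D2 = insert y (D - {d})"
    have D2dom: "dominating V E D2"
      unfolding dominating_def
    proof (intro conjI ballI)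
      show "D2 \<subseteq> V" using DV yV by (auto simp: D2_def)
    next
      fix u assume uV: "u \<in> V"
      have "closed_nbhd V E u \<inter> D \<noteq> {}" using Ddom uV by (simp add: dominating_def)
      then obtain e where e: "e \<in> closed_nbhd V E u" "e \<in> D" by blast
      show "closed_nbhd V E u \<inter> D2 \<noteq> {}"
      proof (cases "e = d")
        case False
        then show ?thesis using e by (auto simp: D2_def)
      next
        case True
        show ?thesis
        proof (cases "u = d")
          case True
          then have "y \<in> closed_nbhd V E u" using dy yV by (simp add: mem_cn)
          then show ?thesis by (auto simp: D2_def)
        next
          case False
          have ud: "E u d" using e \<open>e = d\<close> False by (auto simp: mem_cn)
          have "u \<notin> D"
          proof
            assume "u \<in> D"
            then have "u \<in> closed_nbhd V E d \<inter> D" using ud sym uV by (simp add: mem_cn)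
            then show False using dD1 False by blast
          qed
          then have "closed_nbhd V E u \<inter> D \<noteq> {d}" by (rule noepn[OF uV])
          moreover have "d \<in> closed_nbhd V E u \<inter> D" using e True by simp
          ultimately obtain e' where "e' \<in> closed_nbhd V E u \<inter> D" "e' \<noteq> d" by blast
          then show ?thesis by (auto simp: D2_def)
        qed
      qed
    qed
    have cardD2: "card D2 = card D"
  proof -
      have "card D > 0" using finD dD by (auto simp: card_gt_0_iff)
      moreover have "card D2 = Suc (card (D - {d}))" using finD yD by (simp add: D2_def)
      ultimately show ?thesis using finD dD by (simp add: card_Diff_singleton)
    qed
    have "D2 \<subseteq> V" using D2dom by (simp add: dominating_def)
    then have D2F: "D2 \<in> F" using D2dom cardD2 Dle
      by (simp add: F_def minimum_dominating_def)
    define K where "K = {v\<in>D. \<exists>u\<in>D. E v u}"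
    define K2 where "K2 = {v\<in>D2. \<exists>u\<in>D2. E v u}"
    have "K \<subseteq> K2"
    proof
      fix v assume "v \<in> K"
      then obtain u where vD: "v \<in> D" and uD: "u \<in> D" and vu: "E v u" by (auto simp: K_def)
      have "v \<noteq> d"
      proof
        assume "v = d"
        then have "u \<in> closed_nbhd V E d \<inter> D" using vu inV uD by (simp add: mem_cn)
        then have "u = d" using dD1 by blast
        then show False using vu \<open>v = d\<close> irr by simp
      qed
      moreover have "u \<noteq> d"
      proof
        assume "u = d"
        then have "v \<in> closed_nbhd V E d \<inter> D" using vu inV vD sym by (simp add: mem_cn)
        then have "v = d" using dD1 by blast
        then show False using vu \<open>u = d\<close> irr by simp
      qed
      ultimately show "v \<in> K2" using vD uD vu by (auto simp: K2_def D2_def)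
    qed
    moreover have "y \<in> K2" using z yz by (auto simp: K2_def D2_def)
    moreover have "y \<notin> K" using yD by (simp add: K_def)
    ultimately have "K \<subset> K2" by blast
    moreover have "finite K2" using finD by (simp add: K2_def D2_def)
    ultimately have "card K < card K2" by (simp add: psubset_card_mono)
    then have "f D < f D2" by (simp add: f_def K_def K2_def)
    then show False using maxD[OF D2F] by simp
  qed
  then show ?thesis using Dmin by blast
qed

theorem proposition18:
  fixes VG :: "'a set" and EG :: "'a \<Rightarrow> 'a \<Rightarrow> bool"
    and VH :: "'b set" and EH :: "'b \<Rightarrow> 'b \<Rightarrow> bool"
    and D :: "'a set"
  assumes "simple_graph VG EG" and "connected_graph VG EG" and "card VG \<ge> 2"
    and "minimum_dominating VG EG D" and "cD VG EG D \<noteq> {}"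
    and "simple_graph VH EH" and "connected_graph VH EH" and "card VH \<ge> 2"
  shows "\<not> well_dominated (VG \<times> VH) (cprod_edges VG EG VH EH)"
proof
  assume wd: "well_dominated (VG \<times> VH) (cprod_edges VG EG VH EH)"
  note sgG = assms(1) and sgH = assms(6)
  have finG: "finite VG" using sgG by (simp add: simple_graph_def)
  have finH: "finite VH" using sgH by (simp add: simple_graph_def)
  have inVG: "\<And>x y. EG x y \<Longrightarrow> x \<in> VG \<and> y \<in> VG" using sgG by (simp add: simple_graph_def)
  have inVH: "\<And>x y. EH x y \<Longrightarrow> x \<in> VH \<and> y \<in> VH" using sgH by (simp add: simple_graph_def)
  have irrH: "\<And>x. \<not> EH x x" using sgH by (simp add: simple_graph_def)
  obtain Ds where Dsmin: "minimum_dominating VG EG Ds"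
    and epn: "\<And>d. d \<in> Ds \<Longrightarrow> \<exists>w\<in>VG. w \<notin> Ds \<and> closed_nbhd VG EG w \<inter> Ds = {d}"
    using epn_exists[OF assms(1,2,3,4)] by blast
  obtain x where xD: "x \<in> D" and pnx: "pn VG EG x D = {x}" using assms(5) by (auto simp: cD_def)
  have Ddom: "dominating VG EG D" using assms(4) by (simp add: minimum_dominating_def)
  have Dsdom: "dominating VG EG Ds" using Dsmin by (simp add: minimum_dominating_def)
  have DV: "D \<subseteq> VG" and DsV: "Ds \<subseteq> VG" using Ddom Dsdom by (auto simp: dominating_def)
  have finD: "finite D" and finDs: "finite Ds" using DV DsV finG finite_subset by blast+
  have cardeq: "card Ds = card D" using Dsmin assms(4) Ddom Dsdom
    by (simp add: minimum_dominating_def) (meson le_antisym)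
  obtain h0 where h0: "h0 \<in> VH" using assms(7) by (auto simp: connected_graph_def)
  obtain h1 where h01: "EH h0 h1" using has_nbr[OF sgH assms(7,8) h0] by blast
  have h1: "h1 \<in> VH" "h1 \<noteq> h0" using inVH h01 irrH by blast+
  define P where "P = VG \<times> VH"
  define cE where "cE = cprod_edges VG EG VH EH"
  have cnP: "\<And>q p. q \<in> closed_nbhd P cE p \<longleftrightarrow> q = p \<or> (q \<in> P \<and> cE p q)"
    by (simp add: mem_cn)
  have cEdef: "\<And>p q. cE p q \<longleftrightarrow> p \<in> VG \<times> VH \<and> q \<in> VG \<times> VH \<and>
     ((fst p = fst q \<and> EH (snd p) (snd q)) \<or> (snd p = snd q \<and> EG (fst p) (fst q)))"
    by (simp add: cE_def cprod_edges_def)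
  define B where "B = Ds \<times> VH"
  define Sm where "Sm = ((D - {x}) \<times> VH) \<union> ({x} \<times> (VH - {h0}))"
  have Bdom: "dominating P cE B"
    unfolding dominating_def
  proof (intro conjI ballI)
    show "B \<subseteq> P" using DsV by (auto simp: B_def P_def)
  next
    fix p assume "p \<in> P"
    then obtain u h where p: "p = (u,h)" "u \<in> VG" "h \<in> VH" by (auto simp: P_def)
    have "closed_nbhd VG EG u \<inter> Ds \<noteq> {}" using Dsdom p by (simp add: dominating_def)
    then obtain d where d: "d \<in> closed_nbhd VG EG u" "d \<in> Ds" by blast
    have "(d,h) \<in> closed_nbhd P cE p" using d p DsV
      by (auto simp: mem_cn cEdef P_def)
    moreover have "(d,h) \<in> B" using d p by (simp add: B_def)
    ultimately show "closed_nbhd P cE p \<inter> B \<noteq> {}" by blast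
  qed
  have Bmin: "minimal_dominating P cE B"
    unfolding minimal_dominating_def
  proof (intro conjI allI impI)
    show "dominating P cE B" by (rule Bdom)
  next
    fix D' assume D'B: "D' \<subset> B"
    then obtain d h where dh: "(d,h) \<in> B" "(d,h) \<notin> D'" by auto
    then have dDs: "d \<in> Ds" and hH: "h \<in> VH" by (auto simp: B_def)
    obtain w where w: "w \<in> VG" "w \<notin> Ds" "closed_nbhd VG EG w \<inter> Ds = {d}" using epn[OF dDs] by blast
    have "closed_nbhd P cE (w,h) \<inter> D' = {}"
    proof (rule ccontr)
      assume "closed_nbhd P cE (w,h) \<inter> D' \<noteq> {}"
      then obtain a b where ab: "(a,b) \<in> closed_nbhd P cE (w,h)" "(a,b) \<in> D'" by auto
      then have aDs: "a \<in> Ds" using D'B by (auto simp: B_def)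
      have "a \<noteq> w" using aDs w by blast
      then have "b = h \<and> EG w a" using ab(1) by (auto simp: cnP cEdef)
      then have "a \<in> closed_nbhd VG EG w \<inter> Ds" using aDs DsV by (auto simp: mem_cn)
      then have "a = d" using w by blast
      then show False using ab dh \<open>b = h \<and> EG w a\<close> by simp
    qed
    moreover have "(w,h) \<in> P" using w hH by (simp add: P_def)
    ultimately show "\<not> dominating P cE D'" by (auto simp: dominating_def)
  qed
  have Smdom: "dominating P cE Sm"
    unfolding dominating_def
  proof (intro conjI ballI)
    show "Sm \<subseteq> P" using DV xD by (auto simp: Sm_def P_def)
  next
    fix p assume "p \<in> P"
    then obtain u h where p: "p = (u,h)" "u \<in> VG" "h \<in> VH" by (auto simp: P_def)
    show "closed_nbhd P cE p \<inter> Sm \<noteq> {}"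
    proof (cases "u = x")
      case False
      have ne: "closed_nbhd VG EG u \<inter> D \<noteq> {}" using Ddom p by (simp add: dominating_def)
      have "closed_nbhd VG EG u \<inter> D \<noteq> {x}"
      proof
        assume "closed_nbhd VG EG u \<inter> D = {x}"
        then have "u \<in> pn VG EG x D" using p by (simp add: pn_def)
        then show False using pnx False by simp
      qed
      then obtain d where d: "d \<in> closed_nbhd VG EG u" "d \<in> D" "d \<noteq> x" using ne by blast
      have "(d,h) \<in> closed_nbhd P cE p" using d p DV
        by (auto simp: mem_cn cEdef P_def)
      moreover have "(d,h) \<in> Sm" using d p by (simp add: Sm_def)
      ultimately show ?thesis by blast
    next
      case True
      show ?thesis
      proof (cases "h = h0")
        case False
        then have "p \<in> Sm" using True p by (simp add: Sm_def)
        then show ?thesis by (auto simp: mem_cn)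
      next
        case hh: True
        have "(x,h1) \<in> closed_nbhd P cE p" using True hh p h1 h01
          by (auto simp: mem_cn cEdef P_def)
        moreover have "(x,h1) \<in> Sm" using h1 by (simp add: Sm_def)
        ultimately show ?thesis by blast
      qed
    qed
  qed
  have "minimum_dominating P cE B" using wd Bmin by (simp add: well_dominated_def P_def cE_def)
  then have le: "card B \<le> card Sm" using Smdom by (simp add: minimum_dominating_def)
  have cB: "card B = card D * card VH" using cardeq by (simp add: B_def card_cartesian_product)
  have "card Sm \<le> card ((D - {x}) \<times> VH) + card ({x} \<times> (VH - {h0}))"
    unfolding Sm_def by (rule card_Un_le)
  also have "\<dots> = (card D - 1) * card VH + (card VH - 1)"
    using finD xD h0 finH by (simp add: card_cartesian_product card_Diff_singleton)
  finally have cS: "card Sm \<le> (card D - 1) * card VH + (card VH - 1)" .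
  have "card D \<ge> 1" using finD xD by (metis One_nat_def Suc_leI card_gt_0_iff empty_iff)
  then obtain k where k: "card D = Suc k" by (cases "card D") auto
  show False using le cB cS k assms(8) by simp
qed

end
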